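(* Let $(u,v)$ be the solution of (1.1) with initial data satisfying $(H_\infty)$, and for $\epsilon>0$ let $w^\epsilon(t,x)=-\epsilon\log u(t/\epsilon,x/\epsilon)$ on $[0,\infty)\times\mathbb{R}$. Then for each compact set $Q\subset\big((0,\infty)\times\mathbb{R}\big)\cup\big(\{0\}\times(-\infty,0)\big)$ there is a constant $C(Q)>0$, independent of $\epsilon$, such that $0\le w^\epsilon(t,x)\le C(Q)$ for all $(t,x)\in Q$ and all $\epsilon\in(0,1/C(Q)]$.
   Context: System (1.1): $\partial_t u-\partial_{xx}u=u(1-u-av)$, $\partial_t v-d\,\partial_{xx}v=rv(1-bu-v)$ for $(t,x)\in(0,\infty)\times\mathbb{R}$, with $u(0,x)=u_0(x)$, $v(0,x)=v_0(x)$, where $d,r>0$ and $a,b\in(0,1)$ are constants. Hypothesis $(H_\infty)$: $u_0,v_0\in C(\mathbb{R};[0,1])$; there exist constants $\theta_0>0$, $x_0>0$ such that $\theta_0\le u_0(x)\le1$ for $x\le 0$ and $u_0(x)=0$ for $x\ge x_0$; $v_0$ is not identically zero and has compact support. (Here $-\log 0=+\infty$.) *)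

theory Defs
  imports "HOL-Analysis.Analysis" "HOL-Library.Extended_Real"
begin

definition classical_sol ::
  "real \<Rightarrow> (real \<Rightarrow> real \<Rightarrow> real) \<Rightarrow> (real \<Rightarrow> real \<Rightarrow> real) \<Rightarrow> (real \<Rightarrow> real) \<Rightarrow> bool" where
  "classical_sol D F f f0 \<longleftrightarrow>
     continuous_on ({0..} \<times> UNIV) (\<lambda>(t,x). f t x) \<and>
     (\<forall>x. f 0 x = f0 x) \<and>
     (\<exists>ft fx fxx.
        continuous_on ({0<..} \<times> UNIV) (\<lambda>(t,x). ft t x) \<and>
        continuous_on ({0<..} \<times> UNIV) (\<lambda>(t,x). fx t x) \<and>
        continuous_on ({0<..} \<times> UNIV) (\<lambda>(t,x). fxx t x) \<and>
        (\<forall>t>0. \<forall>x.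
           ((\<lambda>s. f s x) has_real_derivative ft t x) (at t) \<and>
           ((\<lambda>y. f t y) has_real_derivative fx t x) (at x) \<and>
           ((\<lambda>y. fx t y) has_real_derivative fxx t x) (at x) \<and>
           ft t x - D * fxx t x = F t x))"

definition solves_LV ::
  "real \<Rightarrow> real \<Rightarrow> real \<Rightarrow> real \<Rightarrow> (real \<Rightarrow> real) \<Rightarrow> (real \<Rightarrow> real) \<Rightarrow>
   (real \<Rightarrow> real \<Rightarrow> real) \<Rightarrow> (real \<Rightarrow> real \<Rightarrow> real) \<Rightarrow> bool" where
  "solves_LV d r a b u0 v0 u v \<longleftrightarrow>
     classical_sol 1 (\<lambda>t x. u t x * (1 - u t x - a * v t x)) u u0 \<and>
     classical_sol d (\<lambda>t x. r * v t x * (1 - b * u t x - v t x)) v v0 \<and>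
     bounded ((\<lambda>(t,x). u t x) ` ({0..} \<times> UNIV)) \<and>
     bounded ((\<lambda>(t,x). v t x) ` ({0..} \<times> UNIV))"

definition H_infty :: "(real \<Rightarrow> real) \<Rightarrow> (real \<Rightarrow> real) \<Rightarrow> bool" where
  "H_infty u0 v0 \<longleftrightarrow>
     continuous_on UNIV u0 \<and> continuous_on UNIV v0 \<and>
     (\<forall>x. 0 \<le> u0 x \<and> u0 x \<le> 1) \<and> (\<forall>x. 0 \<le> v0 x \<and> v0 x \<le> 1) \<and>
     (\<exists>\<theta>0>0. \<exists>x0>0. (\<forall>x\<le>0. \<theta>0 \<le> u0 x \<and> u0 x \<le> 1) \<and> (\<forall>x\<ge>x0. u0 x = 0)) \<and>
     (\<exists>x. v0 x \<noteq> 0) \<and>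
     compact (closure {x. v0 x \<noteq> 0})"

text \<open>w^eps(t,x) = - eps log u(t/eps, x/eps), with the convention -log 0 = +infinity.\<close>
definition w_eps :: "(real \<Rightarrow> real \<Rightarrow> real) \<Rightarrow> real \<Rightarrow> real \<Rightarrow> real \<Rightarrow> ereal" where
  "w_eps u \<epsilon> t x =
     (if u (t/\<epsilon>) (x/\<epsilon>) > 0 then ereal (- \<epsilon> * ln (u (t/\<epsilon>) (x/\<epsilon>))) else \<infinity>)"

end

theory Submission
  imports Defs
begin


lemma pt_max:
  fixes f :: "real \<Rightarrow> real \<Rightarrow> real" and fx :: "real \<Rightarrow> real"
  assumes h: "h > 0" and D: "D > 0"
    and mx: "\<forall>y. \<bar>y - x\<bar> < h \<longrightarrow> f t y \<le> f t x"
    and mt: "\<forall>s. t - h < s \<and> s \<le> t \<longrightarrow> f s x \<le> f t x"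
    and dt: "((\<lambda>s. f s x) has_real_derivative ft) (at t)"
    and dx: "\<forall>y. ((\<lambda>y. f t y) has_real_derivative fx y) (at y)"
    and dxx: "(fx has_real_derivative fxx) (at x)"
  shows "ft - D * fxx \<ge> 0"
proof -
  have ft: "ft \<ge> 0"
  proof (rule ccontr)
    assume "\<not> ft \<ge> 0"
    then have "ft < 0" by simp
    from DERIV_neg_dec_left[OF dt this] obtain d where d: "d > 0"
      and lt: "\<forall>k>0. k < d \<longrightarrow> f t x < f (t - k) x" by blast
    define k where "k = min d h / 2"
    have "k > 0" "k < d" "k < h" using d h by (auto simp: k_def)
    then have "f t x < f (t - k) x" using lt by blast
    moreover have "f (t - k) x \<le> f t x" using mt \<open>k > 0\<close> \<open>k < h\<close> by auto
    ultimately show False by simp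
  qed
  have fx0: "fx x = 0"
    using DERIV_local_max[OF spec[OF dx, of x] h] mx by (auto simp: abs_minus_commute)
  have fxx: "fxx \<le> 0"
  proof (rule ccontr)
    assume "\<not> fxx \<le> 0"
    then have "fxx > 0" by simp
    from DERIV_pos_inc_right[OF dxx this] obtain d where d: "d > 0"
      and lt: "\<forall>k>0. k < d \<longrightarrow> fx x < fx (x + k)" by blast
    define k where "k = min d h / 2"
    have k: "k > 0" "k < d" "k < h" using d h by (auto simp: k_def)
    have "x < x + k" using k by simp
    from MVT2[OF this, of "\<lambda>y. f t y" fx] dx obtain z where z: "x < z" "z < x + k"
      "f t (x + k) - f t x = (x + k - x) * fx z" by blast
    have "fx z > 0" using lt[rule_format, of "z - x"] z k fx0 by auto
    then have "k * fx z > 0" using k by simp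
    then have "f t (x + k) > f t x" using z by simp
    moreover have "f t (x + k) \<le> f t x" using mx k by auto
    ultimately show False by simp
  qed
  have "D * fxx \<le> 0" using fxx D by (simp add: mult_nonneg_nonpos)
  then show ?thesis using ft by simp
qed

lemma max_principle_compact:
  fixes f ft fx fxx :: "real \<Rightarrow> real \<Rightarrow> real" and K :: "(real \<times> real) set"
  assumes K: "compact K" and cont: "continuous_on K (\<lambda>(t,x). f t x)" and D: "D > 0"
    and H: "\<And>t x. (t,x) \<in> K \<Longrightarrow> f t x > 0 \<Longrightarrow>
       t > 0 \<and> (\<exists>h>0. (\<forall>y. \<bar>y - x\<bar> < h \<longrightarrow> (t,y) \<in> K) \<and> (\<forall>s. t - h < s \<and> s \<le> t \<longrightarrow> (s,x) \<in> K))
       \<and> ((\<lambda>s. f s x) has_real_derivative ft t x) (at t)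
       \<and> (\<forall>y. ((\<lambda>y. f t y) has_real_derivative fx t y) (at y))
       \<and> ((\<lambda>y. fx t y) has_real_derivative fxx t x) (at x)
       \<and> ft t x - D * fxx t x < 0"
  shows "\<forall>p\<in>K. (\<lambda>(t,x). f t x) p \<le> 0"
proof (cases "K = {}")
  case True then show ?thesis by simp
next
  case False
  from continuous_attains_sup[OF K False cont] obtain p where p: "p \<in> K"
    and pm: "\<forall>q\<in>K. (\<lambda>(t,x). f t x) q \<le> (\<lambda>(t,x). f t x) p" by blast
  obtain t x where ptx: "p = (t,x)" by (cases p)
  show ?thesis
  proof (rule ccontr)
    assume "\<not> ?thesis"
    then obtain q where "q \<in> K" "(\<lambda>(t,x). f t x) q > 0" by force
    then have pos: "f t x > 0" using pm ptx by fastforce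
    from H[OF p[unfolded ptx] pos] obtain h where h: "h > 0"
      and hy: "\<forall>y. \<bar>y - x\<bar> < h \<longrightarrow> (t,y) \<in> K"
      and hs: "\<forall>s. t - h < s \<and> s \<le> t \<longrightarrow> (s,x) \<in> K"
      and d1: "((\<lambda>s. f s x) has_real_derivative ft t x) (at t)"
      and d2: "\<forall>y. ((\<lambda>y. f t y) has_real_derivative fx t y) (at y)"
      and d3: "((\<lambda>y. fx t y) has_real_derivative fxx t x) (at x)"
      and neg: "ft t x - D * fxx t x < 0" by blast
    have "ft t x - D * fxx t x \<ge> 0"
    proof (rule pt_max[OF h D _ _ d1 d2 d3])
      show "\<forall>y. \<bar>y - x\<bar> < h \<longrightarrow> f t y \<le> f t x"
        using hy pm ptx by fastforce
      show "\<forall>s. t - h < s \<and> s \<le> t \<longrightarrow> f s x \<le> f t x"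
        using hs pm ptx by fastforce
    qed
    with neg show False by simp
  qed
qed



lemma max_principle_R:
  fixes z zt zx zxx :: "real \<Rightarrow> real \<Rightarrow> real"
  assumes D: "D > 0" and C: "C \<ge> 0"
    and cont: "continuous_on ({0..} \<times> UNIV) (\<lambda>(t,x). z t x)"
    and bnd: "\<forall>t\<ge>0. \<forall>x. \<bar>z t x\<bar> \<le> M"
    and init: "\<forall>x. z 0 x \<le> 0"
    and der: "\<forall>t>0. \<forall>x. ((\<lambda>s. z s x) has_real_derivative zt t x) (at t) \<and>
                ((\<lambda>y. z t y) has_real_derivative zx t x) (at x) \<and>
                ((\<lambda>y. zx t y) has_real_derivative zxx t x) (at x)"
    and ineq: "\<forall>t>0. \<forall>x. z t x > 0 \<longrightarrow> zt t x - D * zxx t x \<le> C * z t x"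
  shows "\<forall>t\<ge>0. \<forall>x. z t x \<le> 0"
proof (intro allI impI)
  fix t0 x0 :: real assume t0: "t0 \<ge> 0"
  have M0: "M \<ge> 0" using bnd t0 by force
  have key: "exp (-(C+1)*t0) * z t0 x0 \<le> \<delta> * (1 + x0^2 + 2*D*t0)" if dp: "\<delta> > 0" for \<delta>
  proof -
    define g where "g t x = exp (-(C+1)*t) * z t x - \<delta> * (1 + x^2 + 2*D*t)" for t x
    define gt where "gt t x = -(C+1) * exp (-(C+1)*t) * z t x + exp (-(C+1)*t) * zt t x - \<delta> * (2*D)" for t x
    define gx where "gx t x = exp (-(C+1)*t) * zx t x - \<delta> * (2*x)" for t x
    define gxx where "gxx t x = exp (-(C+1)*t) * zxx t x - \<delta> * 2" for t x
    define R where "R = sqrt (M/\<delta>) + \<bar>x0\<bar> + 1"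
    define K where "K = {0..t0} \<times> {-R..R}"
    have Kc: "compact K" unfolding K_def by (intro compact_Times compact_Icc)
    have KS: "K \<subseteq> {0..} \<times> UNIV" unfolding K_def by auto
    have contg: "continuous_on K (\<lambda>(t,x). g t x)"
    proof -
      have c1: "continuous_on K (\<lambda>p. (\<lambda>(t,x). z t x) p)"
        using continuous_on_subset[OF cont KS] .
      have "continuous_on K (\<lambda>p. exp (-(C+1)*fst p) * (\<lambda>(t,x). z t x) p - \<delta> * (1 + (snd p)^2 + 2*D*fst p))"
        by (intro continuous_intros c1)
      then show ?thesis unfolding g_def by (simp add: case_prod_beta)
    qed
    have "\<forall>p\<in>K. (\<lambda>(t,x). g t x) p \<le> 0"
    proof (rule max_principle_compact[OF Kc contg D, where ft=gt and fx=gx and fxx=gxx])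
      fix t x assume tx: "(t,x) \<in> K" and gp: "g t x > 0"
      have e0: "exp (-(C+1)*t) > 0" by simp
      have tK: "0 \<le> t" "t \<le> t0" "\<bar>x\<bar> \<le> R" using tx by (auto simp: K_def)
      have "-(C+1)*t \<le> 0" using tK C by (intro mult_nonpos_nonneg) auto
      then have e1: "exp (-(C+1)*t) \<le> 1" by simp
      have pos: "\<delta> * (1 + x^2 + 2*D*t) > 0" proof -
        have "0 \<le> x^2" by simp
        moreover have "0 \<le> 2*D*t" using D tK by simp
        ultimately show ?thesis using dp by (intro mult_pos_pos) linarith+
      qed
      then have ezp: "exp (-(C+1)*t) * z t x > 0" using gp by (simp add: g_def)
      then have zp: "z t x > 0" using e0 by (simp add: zero_less_mult_iff)
      have tp: "t > 0"
      proof (rule ccontr)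
        assume "\<not> t > 0" then have "t = 0" using tK by simp
        then show False using init[rule_format, of x] zp by simp
      qed
      have "exp (-(C+1)*t) * z t x \<le> M"
      proof -
        have "z t x \<le> M" using bnd[rule_format, OF tK(1), of x] by (simp add: abs_le_iff)
        moreover have "exp (-(C+1)*t) * z t x \<le> 1 * z t x" using mult_right_mono[OF e1, of "z t x"] zp by simp
        ultimately show ?thesis by simp
      qed
      moreover have "\<delta> * (1 + x^2 + 2*D*t) = \<delta> + \<delta>*x^2 + \<delta>*(2*D*t)" by (simp add: algebra_simps)
      moreover have "\<delta>*(2*D*t) \<ge> 0" using dp D tK by simp
      ultimately have "\<delta> * x^2 < M" using gp dp unfolding g_def by linarith
      then have "x^2 < M/\<delta>" using dp by (simp add: field_simps)
      then have "sqrt (x^2) < sqrt (M/\<delta>)" by (rule real_sqrt_less_mono)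
      then have xR: "\<bar>x\<bar> < R" by (simp add: R_def)
      define h where "h = min t (R - \<bar>x\<bar>)"
      have hp: "h > 0" using tp xR by (simp add: h_def)
      have nb: "(\<forall>y. \<bar>y - x\<bar> < h \<longrightarrow> (t,y) \<in> K) \<and> (\<forall>s. t - h < s \<and> s \<le> t \<longrightarrow> (s,x) \<in> K)"
        using tK unfolding K_def h_def by auto
      obtain d1 d2 d3 where
        d1: "((\<lambda>s. z s x) has_real_derivative zt t x) (at t)" and
        d2: "\<forall>y. ((\<lambda>y. z t y) has_real_derivative zx t y) (at y)" and
        d3: "((\<lambda>y. zx t y) has_real_derivative zxx t x) (at x)"
        using der tp by blast
      have D1: "((\<lambda>s. g s x) has_real_derivative gt t x) (at t)"
        unfolding g_def gt_def
        by (rule derivative_eq_intros d1 refl | simp)+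
      have D2: "\<forall>y. ((\<lambda>y. g t y) has_real_derivative gx t y) (at y)"
      proof
        fix y show "((\<lambda>y. g t y) has_real_derivative gx t y) (at y)"
          unfolding g_def gx_def
          by (rule derivative_eq_intros d2[rule_format] refl | simp)+
      qed
      have D3: "((\<lambda>y. gx t y) has_real_derivative gxx t x) (at x)"
        unfolding gx_def gxx_def
        by (rule derivative_eq_intros d3 refl | simp)+
      have "gt t x - D * gxx t x = exp (-(C+1)*t) * (zt t x - D * zxx t x) - (C+1) * (exp (-(C+1)*t) * z t x)"
        unfolding gt_def gxx_def by (simp add: algebra_simps)
      also have "\<dots> \<le> exp (-(C+1)*t) * (C * z t x) - (C+1) * (exp (-(C+1)*t) * z t x)"
        using ineq tp zp e0 by (simp add: mult_left_mono)
      also have "\<dots> = - (exp (-(C+1)*t) * z t x)" by (simp add: algebra_simps)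
      also have "\<dots> < 0" using ezp by simp
      finally have neg: "gt t x - D * gxx t x < 0" .
      show "t > 0 \<and> (\<exists>h>0. (\<forall>y. \<bar>y - x\<bar> < h \<longrightarrow> (t,y) \<in> K) \<and> (\<forall>s. t - h < s \<and> s \<le> t \<longrightarrow> (s,x) \<in> K))
       \<and> ((\<lambda>s. g s x) has_real_derivative gt t x) (at t)
       \<and> (\<forall>y. ((\<lambda>y. g t y) has_real_derivative gx t y) (at y))
       \<and> ((\<lambda>y. gx t y) has_real_derivative gxx t x) (at x)
       \<and> gt t x - D * gxx t x < 0"
        using tp hp nb D1 D2 D3 neg by blast
    qed
    moreover have "(t0,x0) \<in> K"
    proof -
      have sq: "0 \<le> sqrt (M/\<delta>)" using M0 dp by simp
      have "-R \<le> x0" "x0 \<le> R" unfolding R_def using sq abs_ge_self[of x0] abs_ge_minus_self[of x0] by linarith+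
      then show ?thesis using t0 unfolding K_def by simp
    qed
    ultimately have "g t0 x0 \<le> 0" by fastforce
    then show ?thesis by (simp add: g_def)
  qed
  show "z t0 x0 \<le> 0"
  proof (rule ccontr)
    assume "\<not> z t0 x0 \<le> 0"
    then have zp: "z t0 x0 > 0" by simp
    define A where "A = exp (-(C+1)*t0) * z t0 x0"
    define B where "B = 1 + x0^2 + 2*D*t0"
    have Ap: "A > 0" using zp by (simp add: A_def)
    have Bp: "B > 0" using D t0 by (simp add: B_def add_pos_nonneg)
    have "A \<le> (A/(2*B)) * B" using key[of "A/(2*B)"] Ap Bp by (simp add: A_def B_def)
    also have "\<dots> = A/2" using Bp by simp
    finally show False using Ap by simp
  qed
qed



lemma max_principle_moving:
  fixes z zt zx zxx :: "real \<Rightarrow> real \<Rightarrow> real"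
  assumes D: "D > 0" and C: "C \<ge> 0" and L: "L > 0"
    and cont: "continuous_on ({0..} \<times> UNIV) (\<lambda>(t,x). z t x)"
    and init: "\<forall>y. \<bar>y - y0\<bar> \<le> L \<longrightarrow> z 0 y \<le> 0"
    and bdry: "\<forall>s\<ge>0. z s (y0 + c * s + L) \<le> 0 \<and> z s (y0 + c * s - L) \<le> 0"
    and der: "\<forall>t>0. \<forall>x. ((\<lambda>s. z s x) has_real_derivative zt t x) (at t) \<and>
                ((\<lambda>y. z t y) has_real_derivative zx t x) (at x) \<and>
                ((\<lambda>y. zx t y) has_real_derivative zxx t x) (at x)"
    and ineq: "\<forall>t>0. \<forall>x. z t x > 0 \<longrightarrow> zt t x - D * zxx t x \<le> C * z t x"
  shows "\<forall>s\<ge>0. \<forall>y. \<bar>y - y0 - c * s\<bar> \<le> L \<longrightarrow> z s y \<le> 0"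
proof (intro allI impI)
  fix s0 y1 :: real assume s0: "s0 \<ge> 0" and y1: "\<bar>y1 - y0 - c * s0\<bar> \<le> L"
  define g where "g t x = exp (-(C+1)*t) * z t x" for t x
  define gt where "gt t x = -(C+1) * exp (-(C+1)*t) * z t x + exp (-(C+1)*t) * zt t x" for t x
  define gx where "gx t x = exp (-(C+1)*t) * zx t x" for t x
  define gxx where "gxx t x = exp (-(C+1)*t) * zxx t x" for t x
  define B where "B = \<bar>y0\<bar> + \<bar>c\<bar> * s0 + L"
  define K where "K = ({0..s0} \<times> {-B..B}) \<inter> {p. \<bar>snd p - y0 - c * fst p\<bar> \<le> L}"
  have cl: "closed {p::real\<times>real. \<bar>snd p - y0 - c * fst p\<bar> \<le> L}"
    by (intro closed_Collect_le continuous_intros)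
  have Kc: "compact K" unfolding K_def
    by (intro compact_Int_closed compact_Times compact_Icc cl)
  have Kalt: "(s,y) \<in> K \<longleftrightarrow> 0 \<le> s \<and> s \<le> s0 \<and> \<bar>y - y0 - c * s\<bar> \<le> L" for s y
  proof
    assume "0 \<le> s \<and> s \<le> s0 \<and> \<bar>y - y0 - c * s\<bar> \<le> L"
    then have h: "0 \<le> s" "s \<le> s0" "\<bar>y - y0 - c * s\<bar> \<le> L" by auto
    have "\<bar>c * s\<bar> \<le> \<bar>c\<bar> * s0" using h by (simp add: abs_mult mult_left_mono)
    then have "\<bar>y\<bar> \<le> B" unfolding B_def using h(3) by linarith
    then show "(s,y) \<in> K" using h unfolding K_def by (simp add: abs_le_iff)
  qed (auto simp: K_def)
  have KS: "K \<subseteq> {0..} \<times> UNIV" unfolding K_def by auto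
  have contg: "continuous_on K (\<lambda>(t,x). g t x)"
  proof -
    have c1: "continuous_on K (\<lambda>p. (\<lambda>(t,x). z t x) p)"
      using continuous_on_subset[OF cont KS] .
    have "continuous_on K (\<lambda>p. exp (-(C+1)*fst p) * (\<lambda>(t,x). z t x) p)"
      by (intro continuous_intros c1)
    then show ?thesis unfolding g_def by (simp add: case_prod_beta)
  qed
  have "\<forall>p\<in>K. (\<lambda>(t,x). g t x) p \<le> 0"
  proof (rule max_principle_compact[OF Kc contg D, where ft=gt and fx=gx and fxx=gxx])
    fix t x assume tx: "(t,x) \<in> K" and gp: "g t x > 0"
    have e0: "exp (-(C+1)*t) > 0" by simp
    have tK: "0 \<le> t" "t \<le> s0" "\<bar>x - y0 - c*t\<bar> \<le> L" using tx Kalt by auto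
    have zp: "z t x > 0" using gp e0 by (simp add: g_def zero_less_mult_iff)
    have tp: "t > 0"
    proof (rule ccontr)
      assume "\<not> t > 0" then have "t = 0" using tK by simp
      then show False using init[rule_format, of x] zp tK(3) by simp
    qed
    have xi: "\<bar>x - y0 - c*t\<bar> < L"
    proof (rule ccontr)
      assume "\<not> ?thesis"
      then have "x = y0 + c*t + L \<or> x = y0 + c*t - L" using tK(3) by (auto simp: abs_if split: if_splits)
      then show False using bdry tK zp by force
    qed
    define \<xi> where "\<xi> = \<bar>x - y0 - c*t\<bar>"
    define h where "h = min t ((L - \<xi>)/(\<bar>c\<bar>+1))"
    have hp: "h > 0" using tp xi by (simp add: h_def \<xi>_def)
    have ch: "\<bar>c\<bar> * h < L - \<xi>"
    proof -
      have "\<bar>c\<bar> * h \<le> \<bar>c\<bar> * ((L - \<xi>)/(\<bar>c\<bar>+1))" unfolding h_def by (intro mult_left_mono) auto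
      also have "\<dots> < (\<bar>c\<bar>+1) * ((L - \<xi>)/(\<bar>c\<bar>+1))"
        using xi by (intro mult_strict_right_mono) (auto simp: \<xi>_def)
      also have "\<dots> = L - \<xi>" by simp
      finally show ?thesis .
    qed
    have hL: "h \<le> L - \<xi>"
    proof -
      have "h \<le> (L - \<xi>)/(\<bar>c\<bar>+1)" by (simp add: h_def)
      also have "\<dots> \<le> L - \<xi>"
      proof -
        have "0 \<le> (L - \<xi>) * \<bar>c\<bar>" using xi by (simp add: \<xi>_def)
        then have "L - \<xi> \<le> (L - \<xi>) * (\<bar>c\<bar>+1)" by (simp add: algebra_simps)
        moreover have "0 < \<bar>c\<bar>+1" by simp
        ultimately show ?thesis by (simp only: divide_le_eq) simp
      qed
      finally show ?thesis .
    qed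
    have nb1: "\<forall>y. \<bar>y - x\<bar> < h \<longrightarrow> (t,y) \<in> K"
    proof (intro allI impI)
      fix y assume "\<bar>y - x\<bar> < h"
      then have "\<bar>y - y0 - c*t\<bar> \<le> L" using hL unfolding \<xi>_def by linarith
      then show "(t,y) \<in> K" using Kalt tK by simp
    qed
    have nb2: "\<forall>s. t - h < s \<and> s \<le> t \<longrightarrow> (s,x) \<in> K"
    proof (intro allI impI)
      fix s assume s: "t - h < s \<and> s \<le> t"
      have "\<bar>c * s - c*t\<bar> = \<bar>c\<bar> * \<bar>s - t\<bar>" by (simp add: abs_mult[symmetric] algebra_simps)
      also have "\<dots> \<le> \<bar>c\<bar> * h" using s by (intro mult_left_mono) auto
      finally have "\<bar>x - y0 - c * s\<bar> \<le> L" using ch unfolding \<xi>_def by linarith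
      moreover have "0 \<le> s" using s h_def by auto
      ultimately show "(s,x) \<in> K" using Kalt tK s by simp
    qed
    obtain d1 d2 d3 where
      d1: "((\<lambda>s. z s x) has_real_derivative zt t x) (at t)" and
      d2: "\<forall>y. ((\<lambda>y. z t y) has_real_derivative zx t y) (at y)" and
      d3: "((\<lambda>y. zx t y) has_real_derivative zxx t x) (at x)"
      using der tp by blast
    have D1: "((\<lambda>s. g s x) has_real_derivative gt t x) (at t)"
      unfolding g_def gt_def
      by (rule derivative_eq_intros d1 refl | simp)+
    have D2: "\<forall>y. ((\<lambda>y. g t y) has_real_derivative gx t y) (at y)"
    proof
      fix y show "((\<lambda>y. g t y) has_real_derivative gx t y) (at y)"
        unfolding g_def gx_def
        by (rule derivative_eq_intros d2[rule_format] refl | simp)+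
    qed
    have D3: "((\<lambda>y. gx t y) has_real_derivative gxx t x) (at x)"
      unfolding gx_def gxx_def
      by (rule derivative_eq_intros d3 refl | simp)+
    have "gt t x - D * gxx t x = exp (-(C+1)*t) * (zt t x - D * zxx t x) - (C+1) * (exp (-(C+1)*t) * z t x)"
      unfolding gt_def gxx_def by (simp add: algebra_simps)
    also have "\<dots> \<le> exp (-(C+1)*t) * (C * z t x) - (C+1) * (exp (-(C+1)*t) * z t x)"
      using ineq tp zp e0 by (simp add: mult_left_mono)
    also have "\<dots> = - (exp (-(C+1)*t) * z t x)" by (simp add: algebra_simps)
    also have "\<dots> < 0" using zp by simp
    finally have neg: "gt t x - D * gxx t x < 0" .
    show "t > 0 \<and> (\<exists>h>0. (\<forall>y. \<bar>y - x\<bar> < h \<longrightarrow> (t,y) \<in> K) \<and> (\<forall>s. t - h < s \<and> s \<le> t \<longrightarrow> (s,x) \<in> K))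
     \<and> ((\<lambda>s. g s x) has_real_derivative gt t x) (at t)
     \<and> (\<forall>y. ((\<lambda>y. g t y) has_real_derivative gx t y) (at y))
     \<and> ((\<lambda>y. gx t y) has_real_derivative gxx t x) (at x)
     \<and> gt t x - D * gxx t x < 0"
      using tp hp nb1 nb2 D1 D2 D3 neg by blast
  qed
  moreover have "(s0,y1) \<in> K" using Kalt s0 y1 by simp
  ultimately have "g s0 y1 \<le> 0" by fastforce
  then show "z s0 y1 \<le> 0" by (simp add: g_def mult_le_0_iff)
qed



lemma phi_derivs:
  fixes \<eta> lam c y0 k :: real
  defines "\<phi> \<equiv> \<lambda>s y. \<eta> * exp (-lam * s) * exp (-(c/2)*(y - y0 - c * s)) * cos (k*(y - y0 - c * s))"
  shows "((\<lambda>s. \<phi> s y) has_real_derivative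
           \<eta> * exp (-lam*t) * exp (-(c/2)*(y - y0 - c * t)) *
             ((c^2/2 - lam) * cos (k*(y - y0 - c * t)) + c*k * sin (k*(y - y0 - c * t)))) (at t)"
    and "((\<lambda>y. \<phi> t y) has_real_derivative
           \<eta> * exp (-lam*t) * exp (-(c/2)*(y - y0 - c * t)) *
             (-(c/2) * cos (k*(y - y0 - c * t)) - k * sin (k*(y - y0 - c * t)))) (at y)"
    and "((\<lambda>y. \<eta> * exp (-lam*t) * exp (-(c/2)*(y - y0 - c * t)) *
             (-(c/2) * cos (k*(y - y0 - c * t)) - k * sin (k*(y - y0 - c * t)))) has_real_derivative
           \<eta> * exp (-lam*t) * exp (-(c/2)*(y - y0 - c * t)) *
             ((c^2/4 - k^2) * cos (k*(y - y0 - c * t)) + c*k * sin (k*(y - y0 - c * t)))) (at y)"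
  unfolding \<phi>_def
  by (rule derivative_eq_intros refl | simp add: algebra_simps power2_eq_square)+

lemma lower_bound:
  fixes u v ut ux uxx :: "real \<Rightarrow> real \<Rightarrow> real" and a Mu Mv \<theta>0 \<eta> c y0 :: real
  assumes a: "a \<ge> 0" and Mu: "Mu \<ge> 0" and Mv: "Mv \<ge> 0"
    and cont: "continuous_on ({0..} \<times> UNIV) (\<lambda>(t,x). u t x)"
    and der: "\<forall>t>0. \<forall>x. ((\<lambda>s. u s x) has_real_derivative ut t x) (at t) \<and>
                ((\<lambda>y. u t y) has_real_derivative ux t x) (at x) \<and>
                ((\<lambda>y. ux t y) has_real_derivative uxx t x) (at x)"
    and eq: "\<forall>t>0. \<forall>x. ut t x - 1 * uxx t x = u t x * (1 - u t x - a * v t x)"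
    and nn: "\<forall>t\<ge>0. \<forall>x. 0 \<le> u t x"
    and ub: "\<forall>t\<ge>0. \<forall>x. u t x \<le> Mu"
    and vb: "\<forall>t\<ge>0. \<forall>x. v t x \<le> Mv"
    and init: "\<forall>y\<le>0. \<theta>0 \<le> u 0 y"
    and eta: "\<eta> > 0" "\<eta> * exp (\<bar>c\<bar>/2) \<le> \<theta>0" and y0: "y0 + 1 \<le> 0"
  shows "\<forall>s\<ge>0. \<eta> * exp (-(c^2/4 + pi^2/4 + (1 + Mu + a*Mv)) * s) \<le> u s (y0 + c * s)"
proof -
  define K where "K = 1 + Mu + a*Mv"
  have K0: "K \<ge> 0" using a Mu Mv by (simp add: K_def)
  define k :: real where "k = pi/2"
  define lam where "lam = c^2/4 + k^2 + K"
  have lam_eq: "c^2/4 + pi^2/4 + (1 + Mu + a*Mv) = lam"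
    by (simp add: lam_def k_def K_def power_divide)
  define \<phi> where "\<phi> = (\<lambda>s y. \<eta> * exp (-lam * s) * exp (-(c/2)*(y - y0 - c * s)) * cos (k*(y - y0 - c * s)))"
  define E where "E = (\<lambda>s y. \<eta> * exp (-lam * s) * exp (-(c/2)*(y - y0 - c * s)))"
  define \<phi>t where "\<phi>t = (\<lambda>t y. E t y * ((c^2/2 - lam) * cos (k*(y - y0 - c * t)) + c*k * sin (k*(y - y0 - c * t))))"
  define \<phi>x where "\<phi>x = (\<lambda>t y. E t y * (-(c/2) * cos (k*(y - y0 - c * t)) - k * sin (k*(y - y0 - c * t))))"
  define \<phi>xx where "\<phi>xx = (\<lambda>t y. E t y * ((c^2/4 - k^2) * cos (k*(y - y0 - c * t)) + c*k * sin (k*(y - y0 - c * t))))"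
  have pd1: "((\<lambda>s. \<phi> s y) has_real_derivative \<phi>t t y) (at t)" for t y
    unfolding \<phi>_def \<phi>t_def E_def by (rule phi_derivs(1))
  have pd2: "((\<lambda>y. \<phi> t y) has_real_derivative \<phi>x t y) (at y)" for t y
    unfolding \<phi>_def \<phi>x_def E_def by (rule phi_derivs(2))
  have pd3: "((\<lambda>y. \<phi>x t y) has_real_derivative \<phi>xx t y) (at y)" for t y
    unfolding \<phi>x_def \<phi>xx_def E_def by (rule phi_derivs(3))
  have pde: "\<phi>t t y - \<phi>xx t y = - K * \<phi> t y" for t y
    unfolding \<phi>t_def \<phi>xx_def \<phi>_def E_def lam_def by (simp add: algebra_simps power2_eq_square)
  define z where "z = (\<lambda>s y. \<phi> s y - u s y)"
  have "\<forall>s\<ge>0. \<forall>y. \<bar>y - y0 - c * s\<bar> \<le> 1 \<longrightarrow> z s y \<le> 0"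
  proof (rule max_principle_moving[where D=1 and C=0 and L=1 and
        zt="\<lambda>t x. \<phi>t t x - ut t x" and zx="\<lambda>t x. \<phi>x t x - ux t x" and zxx="\<lambda>t x. \<phi>xx t x - uxx t x"])
    show "continuous_on ({0..} \<times> UNIV) (\<lambda>(t,x). z t x)"
    proof -
      have "continuous_on ({0..} \<times> UNIV) (\<lambda>p. \<eta> * exp (-lam * fst p) * exp (-(c/2)*(snd p - y0 - c * fst p)) * cos (k*(snd p - y0 - c * fst p)) - (\<lambda>(t,x). u t x) p)"
        by (intro continuous_intros cont)
      then show ?thesis unfolding z_def \<phi>_def by (simp add: case_prod_beta)
    qed
    show "\<forall>y. \<bar>y - y0\<bar> \<le> 1 \<longrightarrow> z 0 y \<le> 0"
    proof (intro allI impI)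
      fix y assume y: "\<bar>y - y0\<bar> \<le> 1"
      then have "y \<le> 0" using y0 by linarith
      then have u0: "\<theta>0 \<le> u 0 y" using init by simp
      have "-(c/2)*(y - y0) \<le> \<bar>c\<bar>/2"
      proof -
        have "-(c/2)*(y - y0) \<le> \<bar>-(c/2)*(y - y0)\<bar>" by simp
        also have "\<dots> = (\<bar>c\<bar>/2) * \<bar>y - y0\<bar>" by (simp add: abs_mult)
        also have "\<dots> \<le> (\<bar>c\<bar>/2) * 1" using y by (intro mult_left_mono) auto
        finally show ?thesis by simp
      qed
      then have e: "exp (-(c/2)*(y - y0)) \<le> exp (\<bar>c\<bar>/2)" by simp
      have "\<phi> 0 y = \<eta> * exp (-(c/2)*(y - y0)) * cos (k*(y - y0))" by (simp add: \<phi>_def)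
      also have "\<dots> \<le> \<eta> * exp (-(c/2)*(y - y0)) * 1"
        using eta by (intro mult_left_mono) auto
      also have "\<dots> \<le> \<eta> * exp (\<bar>c\<bar>/2)" using e eta by simp
      finally show "z 0 y \<le> 0" using eta u0 by (simp add: z_def)
    qed
    show "\<forall>s\<ge>0. z s (y0 + c * s + 1) \<le> 0 \<and> z s (y0 + c * s - 1) \<le> 0"
    proof (intro allI impI conjI)
      fix s :: real assume s: "s \<ge> 0"
      have c1: "cos (k*1) = 0" "cos (k*(-1)) = 0" by (simp_all add: k_def)
      show "z s (y0 + c * s + 1) \<le> 0" using nn s c1 by (simp add: z_def \<phi>_def)
      show "z s (y0 + c * s - 1) \<le> 0" using nn s c1 by (simp add: z_def \<phi>_def)
    qed
    show "\<forall>t>0. \<forall>x. ((\<lambda>s. z s x) has_real_derivative \<phi>t t x - ut t x) (at t) \<and>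
                ((\<lambda>y. z t y) has_real_derivative \<phi>x t x - ux t x) (at x) \<and>
                ((\<lambda>y. \<phi>x t y - ux t y) has_real_derivative \<phi>xx t x - uxx t x) (at x)"
      using der unfolding z_def by (auto intro!: DERIV_diff pd1 pd2 pd3)
    show "\<forall>t>0. \<forall>x. z t x > 0 \<longrightarrow> (\<phi>t t x - ut t x) - 1 * (\<phi>xx t x - uxx t x) \<le> 0 * z t x"
    proof (intro allI impI)
      fix t x :: real assume t: "t > 0" and zp: "z t x > 0"
      have u0: "0 \<le> u t x" "u t x \<le> Mu" "v t x \<le> Mv" using nn ub vb t by auto
      have "a * v t x \<le> a * Mv" using a u0 by (simp add: mult_left_mono)
      then have "1 - u t x - a * v t x \<ge> -K" using u0 by (simp add: K_def)
      then have "u t x * (1 - u t x - a * v t x) \<ge> u t x * (-K)" using u0 by (intro mult_left_mono) auto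
      moreover have "(\<phi>t t x - ut t x) - 1 * (\<phi>xx t x - uxx t x) = - K * \<phi> t x - u t x * (1 - u t x - a * v t x)"
        using pde[of t x] eq t by (simp add: algebra_simps)
      ultimately have "(\<phi>t t x - ut t x) - 1 * (\<phi>xx t x - uxx t x) \<le> - K * z t x"
        by (simp add: z_def algebra_simps)
      also have "\<dots> \<le> 0" using K0 zp by simp
      finally show "(\<phi>t t x - ut t x) - 1 * (\<phi>xx t x - uxx t x) \<le> 0 * z t x" by simp
    qed
  qed simp_all
  then have H: "\<And>s. s \<ge> 0 \<Longrightarrow> z s (y0 + c * s) \<le> 0" by simp
  show ?thesis
  proof (intro allI impI)
    fix s :: real assume "s \<ge> 0"
    from H[OF this] show "\<eta> * exp (-(c^2/4 + pi^2/4 + (1 + Mu + a*Mv)) * s) \<le> u s (y0 + c * s)"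
      unfolding lam_eq by (simp add: z_def \<phi>_def)
  qed
qed



theorem lemma3p2:
  fixes d r a b :: real and u0 v0 :: "real \<Rightarrow> real" and u v :: "real \<Rightarrow> real \<Rightarrow> real"
    and Q :: "(real \<times> real) set"
  assumes "d > 0" "r > 0" "0 < a" "a < 1" "0 < b" "b < 1"
    and "H_infty u0 v0"
    and "solves_LV d r a b u0 v0 u v"
    and "compact Q"
    and "Q \<subseteq> ({0<..} \<times> UNIV) \<union> ({0} \<times> {..<0})"
  shows "\<exists>C>0. \<forall>\<epsilon>. 0 < \<epsilon> \<and> \<epsilon> \<le> 1 / C \<longrightarrow>
           (\<forall>(t,x)\<in>Q. 0 \<le> w_eps u \<epsilon> t x \<and> w_eps u \<epsilon> t x \<le> ereal C)"
proof -
  note d = assms(1) and r = assms(2) and a = assms(3) and b = assms(5)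
  note Qc = assms(9) and QS = assms(10)
  from assms(8) have cu: "classical_sol 1 (\<lambda>t x. u t x * (1 - u t x - a * v t x)) u u0"
    and cv: "classical_sol d (\<lambda>t x. r * v t x * (1 - b * u t x - v t x)) v v0"
    and bu: "bounded ((\<lambda>(t,x). u t x) ` ({0..} \<times> UNIV))"
    and bv: "bounded ((\<lambda>(t,x). v t x) ` ({0..} \<times> UNIV))"
    unfolding solves_LV_def by auto
  from cu obtain ut ux uxx where
    ucont: "continuous_on ({0..} \<times> UNIV) (\<lambda>(t,x). u t x)" and uinit: "\<forall>x. u 0 x = u0 x" and
    uder: "\<forall>t>0. \<forall>x. ((\<lambda>s. u s x) has_real_derivative ut t x) (at t) \<and>
           ((\<lambda>y. u t y) has_real_derivative ux t x) (at x) \<and>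
           ((\<lambda>y. ux t y) has_real_derivative uxx t x) (at x) \<and>
           ut t x - 1 * uxx t x = u t x * (1 - u t x - a * v t x)"
    unfolding classical_sol_def by blast
  from cv obtain vt vx vxx where
    vcont: "continuous_on ({0..} \<times> UNIV) (\<lambda>(t,x). v t x)" and vinit: "\<forall>x. v 0 x = v0 x" and
    vder: "\<forall>t>0. \<forall>x. ((\<lambda>s. v s x) has_real_derivative vt t x) (at t) \<and>
           ((\<lambda>y. v t y) has_real_derivative vx t x) (at x) \<and>
           ((\<lambda>y. vx t y) has_real_derivative vxx t x) (at x) \<and>
           vt t x - d * vxx t x = r * v t x * (1 - b * u t x - v t x)"
    unfolding classical_sol_def by blast
  have u0b: "\<forall>x. 0 \<le> u0 x \<and> u0 x \<le> 1" using assms(7) unfolding H_infty_def by blast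
  have v0b: "\<forall>x. 0 \<le> v0 x \<and> v0 x \<le> 1" using assms(7) unfolding H_infty_def by blast
  have "\<exists>\<theta>0>0. \<exists>x0>0. (\<forall>x\<le>0. \<theta>0 \<le> u0 x \<and> u0 x \<le> 1) \<and> (\<forall>x\<ge>x0. u0 x = 0)"
    using assms(7) unfolding H_infty_def by blast
  then obtain \<theta>0 where th0: "\<theta>0 > 0" and thu: "\<forall>x\<le>0. \<theta>0 \<le> u0 x" by blast
  have th1: "\<theta>0 \<le> 1" using thu u0b by (meson order_trans order_refl)
  obtain Mu0 where Mu0: "\<forall>p\<in>(\<lambda>(t,x). u t x) ` ({0..} \<times> UNIV). norm p \<le> Mu0"
    using bu unfolding Elementary_Metric_Spaces.bounded_iff by blast
  define Mu where "Mu = max Mu0 0"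
  have Mu: "\<forall>t\<ge>0. \<forall>x. \<bar>u t x\<bar> \<le> Mu"
  proof (intro allI impI)
    fix t x :: real assume "t \<ge> 0"
    then have "(t,x) \<in> {0..} \<times> UNIV" by simp
    then have "norm (u t x) \<le> Mu0" using Mu0 by force
    then show "\<bar>u t x\<bar> \<le> Mu" by (simp add: Mu_def)
  qed
  have Mu_nn: "Mu \<ge> 0" by (simp add: Mu_def)
  obtain Mv0 where Mv0: "\<forall>p\<in>(\<lambda>(t,x). v t x) ` ({0..} \<times> UNIV). norm p \<le> Mv0"
    using bv unfolding Elementary_Metric_Spaces.bounded_iff by blast
  define Mv where "Mv = max Mv0 0"
  have Mv: "\<forall>t\<ge>0. \<forall>x. \<bar>v t x\<bar> \<le> Mv"
  proof (intro allI impI)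
    fix t x :: real assume "t \<ge> 0"
    then have "(t,x) \<in> {0..} \<times> UNIV" by simp
    then have "norm (v t x) \<le> Mv0" using Mv0 by force
    then show "\<bar>v t x\<bar> \<le> Mv" by (simp add: Mv_def)
  qed
  have Mv_nn: "Mv \<ge> 0" by (simp add: Mv_def)

  have vnn: "\<forall>t\<ge>0. \<forall>x. - v t x \<le> 0"
  proof (rule max_principle_R[where D=d and C="r * (1 + b*Mu + Mv)" and M=Mv and
        zt="\<lambda>t x. - vt t x" and zx="\<lambda>t x. - vx t x" and zxx="\<lambda>t x. - vxx t x"])
    show "0 < d" by (rule d)
    show "0 \<le> r * (1 + b*Mu + Mv)" using r b Mu_nn Mv_nn by simp
    show "continuous_on ({0..} \<times> UNIV) (\<lambda>(t,x). - v t x)"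
    proof -
      have "continuous_on ({0..} \<times> UNIV) (\<lambda>p. - (\<lambda>(t,x). v t x) p)"
        by (intro continuous_intros vcont)
      then show ?thesis by (simp add: case_prod_beta)
    qed
    show "\<forall>t\<ge>0. \<forall>x. \<bar>- v t x\<bar> \<le> Mv" using Mv by simp
    show "\<forall>x. - v 0 x \<le> 0" using vinit v0b by simp
    show "\<forall>t>0. \<forall>x. ((\<lambda>s. - v s x) has_real_derivative - vt t x) (at t) \<and>
                ((\<lambda>y. - v t y) has_real_derivative - vx t x) (at x) \<and>
                ((\<lambda>y. - vx t y) has_real_derivative - vxx t x) (at x)"
      using vder by (auto intro!: DERIV_minus)
    show "\<forall>t>0. \<forall>x. - v t x > 0 \<longrightarrow> - vt t x - d * - vxx t x \<le> r * (1 + b*Mu + Mv) * - v t x"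
    proof (intro allI impI)
      fix t x :: real assume t: "t > 0" and zp: "- v t x > 0"
      have e: "- vt t x - d * - vxx t x = r * (1 - b * u t x - v t x) * - v t x"
        using vder t by (simp add: algebra_simps)
      have "- (b * u t x) \<le> b * Mu"
      proof -
        have "- (b * u t x) \<le> b * \<bar>u t x\<bar>" using b by (simp add: abs_if)
        also have "\<dots> \<le> b * Mu" using Mu t b by (intro mult_left_mono) auto
        finally show ?thesis .
      qed
      moreover have "- v t x \<le> Mv" using Mv t by (smt (verit))
      ultimately have "1 - b * u t x - v t x \<le> 1 + b*Mu + Mv" by linarith
      then have "r * (1 - b * u t x - v t x) \<le> r * (1 + b*Mu + Mv)" using r by simp
      then show "- vt t x - d * - vxx t x \<le> r * (1 + b*Mu + Mv) * - v t x"
        unfolding e using zp by (intro mult_right_mono) auto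
    qed
  qed
  have vpos: "\<forall>t\<ge>0. \<forall>x. 0 \<le> v t x" using vnn by simp
  have vbd: "\<forall>t\<ge>0. \<forall>x. v t x \<le> Mv" using Mv by (simp add: abs_le_iff)

  have unn: "\<forall>t\<ge>0. \<forall>x. - u t x \<le> 0"
  proof (rule max_principle_R[where D=1 and C="1 + Mu + a*Mv" and M=Mu and
        zt="\<lambda>t x. - ut t x" and zx="\<lambda>t x. - ux t x" and zxx="\<lambda>t x. - uxx t x"])
    show "0 < (1::real)" by simp
    show "0 \<le> 1 + Mu + a*Mv" using a Mu_nn Mv_nn by simp
    show "continuous_on ({0..} \<times> UNIV) (\<lambda>(t,x). - u t x)"
    proof -
      have "continuous_on ({0..} \<times> UNIV) (\<lambda>p. - (\<lambda>(t,x). u t x) p)"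
        by (intro continuous_intros ucont)
      then show ?thesis by (simp add: case_prod_beta)
    qed
    show "\<forall>t\<ge>0. \<forall>x. \<bar>- u t x\<bar> \<le> Mu" using Mu by simp
    show "\<forall>x. - u 0 x \<le> 0" using uinit u0b by simp
    show "\<forall>t>0. \<forall>x. ((\<lambda>s. - u s x) has_real_derivative - ut t x) (at t) \<and>
                ((\<lambda>y. - u t y) has_real_derivative - ux t x) (at x) \<and>
                ((\<lambda>y. - ux t y) has_real_derivative - uxx t x) (at x)"
      using uder by (auto intro!: DERIV_minus)
    show "\<forall>t>0. \<forall>x. - u t x > 0 \<longrightarrow> - ut t x - 1 * - uxx t x \<le> (1 + Mu + a*Mv) * - u t x"
    proof (intro allI impI)
      fix t x :: real assume t: "t > 0" and zp: "- u t x > 0"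
      have e: "- ut t x - 1 * - uxx t x = (1 - u t x - a * v t x) * - u t x"
        using uder t by (simp add: algebra_simps)
      have "- (a * v t x) \<le> a * Mv"
      proof -
        have "- (a * v t x) \<le> a * \<bar>v t x\<bar>" using a by (simp add: abs_if)
        also have "\<dots> \<le> a * Mv" using Mv t a by (intro mult_left_mono) auto
        finally show ?thesis .
      qed
      moreover have "- u t x \<le> Mu" using Mu t by (smt (verit))
      ultimately have "1 - u t x - a * v t x \<le> 1 + Mu + a*Mv" by linarith
      then show "- ut t x - 1 * - uxx t x \<le> (1 + Mu + a*Mv) * - u t x"
        unfolding e using zp by (intro mult_right_mono) auto
    qed
  qed
  have upos: "\<forall>t\<ge>0. \<forall>x. 0 \<le> u t x" using unn by simp

  have ule: "\<forall>t\<ge>0. \<forall>x. u t x - 1 \<le> 0"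
  proof (rule max_principle_R[where D=1 and C=0 and M="Mu + 1" and
        zt="\<lambda>t x. ut t x" and zx="\<lambda>t x. ux t x" and zxx="\<lambda>t x. uxx t x"])
    show "0 < (1::real)" by simp
    show "0 \<le> (0::real)" by simp
    show "continuous_on ({0..} \<times> UNIV) (\<lambda>(t,x). u t x - 1)"
    proof -
      have "continuous_on ({0..} \<times> UNIV) (\<lambda>p. (\<lambda>(t,x). u t x) p - 1)"
        by (intro continuous_intros ucont)
      then show ?thesis by (simp add: case_prod_beta)
    qed
    show "\<forall>t\<ge>0. \<forall>x. \<bar>u t x - 1\<bar> \<le> Mu + 1"
    proof (intro allI impI)
      fix t x :: real assume "t \<ge> 0"
      then have "\<bar>u t x\<bar> \<le> Mu" using Mu by simp
      then show "\<bar>u t x - 1\<bar> \<le> Mu + 1" by linarith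
    qed
    show "\<forall>x. u 0 x - 1 \<le> 0" using uinit u0b by simp
    show "\<forall>t>0. \<forall>x. ((\<lambda>s. u s x - 1) has_real_derivative ut t x) (at t) \<and>
                ((\<lambda>y. u t y - 1) has_real_derivative ux t x) (at x) \<and>
                ((\<lambda>y. ux t y) has_real_derivative uxx t x) (at x)"
      using uder by (auto intro!: derivative_eq_intros)
    show "\<forall>t>0. \<forall>x. u t x - 1 > 0 \<longrightarrow> ut t x - 1 * uxx t x \<le> 0 * (u t x - 1)"
    proof (intro allI impI)
      fix t x :: real assume t: "t > 0" and zp: "u t x - 1 > 0"
      have e: "ut t x - 1 * uxx t x = u t x * (1 - u t x - a * v t x)"
        using uder t by simp
      have "a * v t x \<ge> 0" using a vpos t by simp
      then have "1 - u t x - a * v t x \<le> 0" using zp by linarith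
      moreover have "u t x \<ge> 0" using zp by simp
      ultimately have "u t x * (1 - u t x - a * v t x) \<le> 0" by (simp add: mult_nonneg_nonpos)
      then show "ut t x - 1 * uxx t x \<le> 0 * (u t x - 1)" using e by simp
    qed
  qed

  define K where "K = 1 + Mu + a*Mv"
  have LB: "\<And>\<eta> c y0. \<eta> > 0 \<Longrightarrow> \<eta> * exp (\<bar>c\<bar>/2) \<le> \<theta>0 \<Longrightarrow> y0 + 1 \<le> 0 \<Longrightarrow>
      \<forall>s\<ge>0. \<eta> * exp (-(c^2/4 + pi^2/4 + K) * s) \<le> u s (y0 + c * s)"
    unfolding K_def
  proof (rule lower_bound[where ut=ut and ux=ux and uxx=uxx and v=v])
    show "0 \<le> a" using a by simp
    show "0 \<le> Mu" "0 \<le> Mv" using Mu_nn Mv_nn by auto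
    show "continuous_on ({0..} \<times> UNIV) (\<lambda>(t,x). u t x)" by (rule ucont)
    show "\<forall>t>0. \<forall>x. ((\<lambda>s. u s x) has_real_derivative ut t x) (at t) \<and>
                ((\<lambda>y. u t y) has_real_derivative ux t x) (at x) \<and>
                ((\<lambda>y. ux t y) has_real_derivative uxx t x) (at x)" using uder by blast
    show "\<forall>t>0. \<forall>x. ut t x - 1 * uxx t x = u t x * (1 - u t x - a * v t x)" using uder by blast
    show "\<forall>t\<ge>0. \<forall>x. 0 \<le> u t x" by (rule upos)
    show "\<forall>t\<ge>0. \<forall>x. u t x \<le> Mu" using Mu by (simp add: abs_le_iff)
    show "\<forall>t\<ge>0. \<forall>x. v t x \<le> Mv" by (rule vbd)
    show "\<forall>y\<le>0. \<theta>0 \<le> u 0 y" using thu uinit by simp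
  qed
  have Kn: "K \<ge> 0" using a Mu_nn Mv_nn by (simp add: K_def)
  have lnth: "ln \<theta>0 \<le> 0" using th0 th1 by simp
  show ?thesis
  proof (cases "Q = {}")
    case True then show ?thesis by (intro exI[of _ 1]) auto
  next
    case False
    have contf: "continuous_on Q (\<lambda>p. max (fst p) (- snd p))" by (intro continuous_intros)
    obtain p0 where p0: "p0 \<in> Q" and pmin: "\<forall>p\<in>Q. max (fst p0) (- snd p0) \<le> max (fst p) (- snd p)"
      using continuous_attains_inf[OF Qc False contf] by blast
    define \<delta> where "\<delta> = max (fst p0) (- snd p0)"
    have \<delta>p: "\<delta> > 0" using QS p0 unfolding \<delta>_def by (cases p0) auto
    have Q\<delta>: "\<delta> \<le> t \<or> x \<le> -\<delta>" if "(t,x) \<in> Q" for t x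
      using pmin that unfolding \<delta>_def by (fastforce simp: max_def split: if_splits)
    have Qt: "0 \<le> t" if "(t,x) \<in> Q" for t x using QS that by auto
    obtain B where B: "\<forall>p\<in>Q. norm p \<le> B"
      using compact_imp_bounded[OF Qc] unfolding Elementary_Metric_Spaces.bounded_iff by blast
    have QB: "\<bar>t\<bar> \<le> B \<and> \<bar>x\<bar> \<le> B" if "(t,x) \<in> Q" for t x
    proof -
      have "norm (t,x) \<le> B" using B that by blast
      moreover have "norm t \<le> norm (t,x)" "norm x \<le> norm (t,x)" by (rule norm_fst_le, rule norm_snd_le)
      ultimately show ?thesis by simp
    qed
    have B0: "B \<ge> 0" using B p0 by (meson norm_ge_zero order_trans)
    define cb where "cb = (B+1)/\<delta>"
    define lam2 where "lam2 = cb^2/4 + pi^2/4 + K"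
    define C where "C = 1 + 1/\<delta> - ln \<theta>0 + cb/2 + lam2 * B"
    have cb0: "cb \<ge> 0" using B0 \<delta>p by (simp add: cb_def)
    have lam20: "lam2 \<ge> 0" using Kn by (simp add: lam2_def)
    have "0 \<le> lam2 * B" using lam20 B0 by simp
    then have C1: "C \<ge> 1 + 1/\<delta>" using lnth cb0 unfolding C_def by linarith
    have Cp: "C > 0" using C1 \<delta>p by (smt (verit) divide_pos_pos)
    have main: "0 \<le> w_eps u \<epsilon> t x \<and> w_eps u \<epsilon> t x \<le> ereal C"
      if tx: "(t,x) \<in> Q" and ep: "0 < \<epsilon>" and eC: "\<epsilon> \<le> 1/C" for t x \<epsilon>
    proof -
      have id: "0 < 1/\<delta>" using \<delta>p by simp
      have Cge1: "C \<ge> 1" using C1 id by linarith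
      have "1/C \<le> 1" using Cge1 by simp
      then have e1: "\<epsilon> \<le> 1" using eC by simp
      have "1/\<delta> \<le> C" using C1 \<delta>p by simp
      then have "1/C \<le> 1/(1/\<delta>)" using id Cp by (intro divide_left_mono) auto
      then have "1/C \<le> \<delta>" by simp
      then have e\<delta>: "\<epsilon> \<le> \<delta>" using eC by simp
      have t0: "0 \<le> t" using Qt tx .
      have tB: "t \<le> B" "\<bar>x\<bar> \<le> B" using QB[OF tx] by auto
      define s where "s = t/\<epsilon>"
      have s0: "s \<ge> 0" using t0 ep by (simp add: s_def)
      have es: "\<epsilon> * s = t" using ep by (simp add: s_def)
      have "\<exists>\<eta> \<Lambda>. \<eta> > 0 \<and> \<eta> \<le> \<theta>0 \<and> 0 \<le> \<Lambda> \<and> \<Lambda> \<le> lam2 \<and> - ln \<eta> \<le> - ln \<theta>0 + cb/2 \<and>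
                  \<eta> * exp (- \<Lambda> * s) \<le> u s (x/\<epsilon>)"
      proof (cases "x \<le> -\<delta>")
        case True
        have "x \<le> -1 * \<epsilon>" using True e\<delta> by simp
        then have "x/\<epsilon> \<le> -1" using ep by (simp add: pos_divide_le_eq)
        then have y0: "x/\<epsilon> + 1 \<le> 0" by simp
        have "\<forall>s\<ge>0. \<theta>0 * exp (-(0^2/4 + pi^2/4 + K) * s) \<le> u s (x/\<epsilon> + 0 * s)"
          using LB[of \<theta>0 0 "x/\<epsilon>"] th0 y0 by simp
        then have L: "\<theta>0 * exp (-(0^2/4 + pi^2/4 + K) * s) \<le> u s (x/\<epsilon>)" using s0 by simp
        show ?thesis
        proof (intro exI conjI)
          show "\<theta>0 > 0" "\<theta>0 \<le> \<theta>0" by (auto simp: th0)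
          show "0 \<le> (0::real)^2/4 + pi^2/4 + K" using Kn by simp
          show "(0::real)^2/4 + pi^2/4 + K \<le> lam2" by (simp add: lam2_def)
          show "- ln \<theta>0 \<le> - ln \<theta>0 + cb/2" using cb0 by simp
        qed (rule L)
      next
        case False
        then have t\<delta>: "\<delta> \<le> t" using Q\<delta>[OF tx] by simp
        then have tp: "t > 0" using \<delta>p by simp
        define c where "c = (x + \<epsilon>)/t"
        define \<eta> where "\<eta> = \<theta>0 * exp (- \<bar>c\<bar>/2)"
        have \<eta>p: "\<eta> > 0" using th0 by (simp add: \<eta>_def)
        have \<eta>e: "\<eta> * exp (\<bar>c\<bar>/2) = \<theta>0" by (simp add: \<eta>_def mult.assoc exp_add[symmetric])
        have L0all: "\<forall>s\<ge>0. \<eta> * exp (-(c^2/4 + pi^2/4 + K) * s) \<le> u s (-1 + c * s)"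
          using LB[of \<eta> c "-1"] \<eta>p \<eta>e by simp
        have L0: "\<eta> * exp (-(c^2/4 + pi^2/4 + K) * s) \<le> u s (-1 + c * s)"
          using L0all s0 by blast
        have eqy: "-1 + c * s = x/\<epsilon>" using tp ep by (simp add: c_def s_def field_simps)
        from L0 have L: "\<eta> * exp (-(c^2/4 + pi^2/4 + K) * s) \<le> u s (x/\<epsilon>)" unfolding eqy .
        have cab: "\<bar>c\<bar> \<le> cb"
        proof -
          have "\<bar>x + \<epsilon>\<bar> \<le> B + 1" using tB e1 ep by linarith
          have "\<bar>c\<bar> = \<bar>x + \<epsilon>\<bar> / t" using tp by (simp add: c_def abs_divide)
          also have "\<dots> \<le> (B+1) / t" using \<open>\<bar>x + \<epsilon>\<bar> \<le> B + 1\<close> tp by (simp add: divide_right_mono)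
          also have "\<dots> \<le> (B+1) / \<delta>" using t\<delta> \<delta>p B0 by (intro divide_left_mono) auto
          finally show ?thesis by (simp add: cb_def)
        qed
        have "c^2 \<le> cb^2"
        proof -
          have "\<bar>c\<bar>^2 \<le> cb^2" using cab by (intro power_mono) auto
          then show ?thesis by simp
        qed
        show ?thesis
        proof (intro exI conjI)
          show "\<eta> > 0" by (rule \<eta>p)
          show "\<eta> \<le> \<theta>0" using th0 by (simp add: \<eta>_def mult_left_le)
          show "0 \<le> c^2/4 + pi^2/4 + K" using Kn by simp
          show "c^2/4 + pi^2/4 + K \<le> lam2" using \<open>c^2 \<le> cb^2\<close> by (simp add: lam2_def)
          show "- ln \<eta> \<le> - ln \<theta>0 + cb/2" using th0 cab by (simp add: \<eta>_def ln_mult)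
        qed (rule L)
      qed
      then obtain \<eta> \<Lambda> where \<eta>p: "\<eta> > 0" and \<eta>t: "\<eta> \<le> \<theta>0" and \<Lambda>0: "0 \<le> \<Lambda>" and \<Lambda>l: "\<Lambda> \<le> lam2"
        and ln\<eta>: "- ln \<eta> \<le> - ln \<theta>0 + cb/2" and L: "\<eta> * exp (- \<Lambda> * s) \<le> u s (x/\<epsilon>)" by blast
      define U where "U = u s (x/\<epsilon>)"
      have Up: "U > 0" using L \<eta>p unfolding U_def by (smt (verit) exp_gt_zero mult_pos_pos)
      have U1: "U \<le> 1" using ule s0 by (simp add: U_def)
      have lnU: "ln U \<le> 0" using Up U1 by simp
      have "ln (\<eta> * exp (- \<Lambda> * s)) \<le> ln U" using L Up \<eta>p unfolding U_def by simp
      then have lnU2: "ln \<eta> - \<Lambda> * s \<le> ln U" using \<eta>p by (simp add: ln_mult)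
      have ln\<eta>0: "- ln \<eta> \<ge> 0" using \<eta>p \<eta>t th1 by simp
      have "- \<epsilon> * ln U \<le> \<epsilon> * (- ln \<eta>) + \<Lambda> * (\<epsilon> * s)"
      proof -
        have "\<epsilon> * (\<Lambda> * s - ln \<eta>) \<ge> \<epsilon> * (- ln U)" using lnU2 ep by (intro mult_left_mono) auto
        then show ?thesis by (simp add: algebra_simps)
      qed
      also have "\<dots> \<le> 1 * (- ln \<eta>) + \<Lambda> * t"
      proof -
        have "\<epsilon> * (- ln \<eta>) \<le> 1 * (- ln \<eta>)" using e1 ln\<eta>0 by (rule mult_right_mono)
        then show ?thesis using es by simp
      qed
      also have "\<dots> \<le> (- ln \<theta>0 + cb/2) + lam2 * B"
      proof -
        have "\<Lambda> * t \<le> lam2 * B" using \<Lambda>0 \<Lambda>l t0 tB by (intro mult_mono) auto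
        then show ?thesis using ln\<eta> by simp
      qed
      also have "\<dots> \<le> C" using \<delta>p by (simp add: C_def)
      finally have up: "- \<epsilon> * ln U \<le> C" .
      have lo: "0 \<le> - \<epsilon> * ln U" using ep lnU by (simp add: mult_nonneg_nonpos)
      have w: "w_eps u \<epsilon> t x = ereal (- \<epsilon> * ln U)" using Up by (simp add: w_eps_def U_def s_def)
      show ?thesis unfolding w using up lo by simp
    qed
    show ?thesis
      using Cp main by (intro exI[of _ C]) auto
  qed
qed


end
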